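(* Let $(G,\cdot,N,\star,\odot)$ be a left bracoid (a left skew bracoid with $(N,\star)$ abelian) and $(H,\circ)$ a group. Assume (a) $\boxdot$ is a transitive right action of $(H,\circ)$ on $N$ such that $g\odot(\eta\boxdot h)=(g\odot\eta)\boxdot h$ for all $g\in G$, $h\in H$, $\eta\in N$; and (b) ${}^{\alpha(g)}(\eta^{\beta(h)})=({}^{\alpha(g)}\eta)^{\beta(h)}$ for all $g\in G$, $h\in H$, $\eta\in N$. Then $(G,\cdot,\odot,H,\circ,\boxdot,N,\star)$ is a two-sided bracoid; in particular $(\eta\star\mu)\boxdot h=(\eta\boxdot h)\star\overline{(e_N\boxdot h)}\star(\mu\boxdot h)$ for all $\eta,\mu\in N$, $h\in H$.
   Context: For a group $(N,\star)$, $e_N$ denotes its identity and $\overline{\eta}$ the inverse of $\eta$. A left skew bracoid is $(G,\cdot,N,\star,\odot)$ with $(G,\cdot),(N,\star)$ groups and $\odot$ a transitive left action of $G$ on $N$ with $g\odot(\mu\star\eta)=(g\odot\mu)\star\overline{(g\odot e_N)}\star(g\odot\eta)$ for all $g\in G$, $\mu,\eta\in N$. A right skew bracoid is $(H,\circ,N,\star,\boxdot)$ with $(H,\circ),(N,\star)$ groups and $\boxdot$ a transitive right action of $H$ on $N$ with $(\eta\star\mu)\boxdot h=(\eta\boxdot h)\star\overline{(e_N\boxdot h)}\star(\mu\boxdot h)$ for all $h\in H$, $\eta,\mu\in N$. A two-sided bracoid $(G,\cdot,\odot,H,\circ,\boxdot,N,\star)$ consists of a left skew bracoid $(G,\cdot,N,\star,\odot)$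 and a right skew bracoid $(H,\circ,N,\star,\boxdot)$ with $(N,\star)$ abelian such that $g\odot(\eta\boxdot h)=(g\odot\eta)\boxdot h$ for all $g\in G,h\in H,\eta\in N$. For $g\in G$, ${}^{\alpha(g)}\eta=\overline{(g\odot e_N)}\star(g\odot\eta)\star\overline{\eta}$. For $h\in H$, $\eta^{\beta(h)}=\overline{\eta}\star(\eta\boxdot h)\star\overline{(e_N\boxdot h)}$. *)

theory Defs
  imports "HOL-Algebra.Group"
begin

definition left_action :: "('g,'a) monoid_scheme \<Rightarrow> ('n,'b) monoid_scheme \<Rightarrow> ('g \<Rightarrow> 'n \<Rightarrow> 'n) \<Rightarrow> bool" where
  "left_action G N act \<longleftrightarrow>
     (\<forall>g\<in>carrier G. \<forall>\<eta>\<in>carrier N. act g \<eta> \<in> carrier N) \<and>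
     (\<forall>\<eta>\<in>carrier N. act \<one>\<^bsub>G\<^esub> \<eta> = \<eta>) \<and>
     (\<forall>g\<in>carrier G. \<forall>k\<in>carrier G. \<forall>\<eta>\<in>carrier N. act (g \<otimes>\<^bsub>G\<^esub> k) \<eta> = act g (act k \<eta>))"

definition transitive_left_action :: "('g,'a) monoid_scheme \<Rightarrow> ('n,'b) monoid_scheme \<Rightarrow> ('g \<Rightarrow> 'n \<Rightarrow> 'n) \<Rightarrow> bool" where
  "transitive_left_action G N act \<longleftrightarrow> left_action G N act \<and>
     (\<forall>\<eta>\<in>carrier N. \<forall>\<mu>\<in>carrier N. \<exists>g\<in>carrier G. act g \<eta> = \<mu>)"

definition right_action :: "('h,'a) monoid_scheme \<Rightarrow> ('n,'b) monoid_scheme \<Rightarrow> ('n \<Rightarrow> 'h \<Rightarrow> 'n) \<Rightarrow> bool" where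
  "right_action H N ract \<longleftrightarrow>
     (\<forall>h\<in>carrier H. \<forall>\<eta>\<in>carrier N. ract \<eta> h \<in> carrier N) \<and>
     (\<forall>\<eta>\<in>carrier N. ract \<eta> \<one>\<^bsub>H\<^esub> = \<eta>) \<and>
     (\<forall>h\<in>carrier H. \<forall>k\<in>carrier H. \<forall>\<eta>\<in>carrier N. ract \<eta> (h \<otimes>\<^bsub>H\<^esub> k) = ract (ract \<eta> h) k)"

definition transitive_right_action :: "('h,'a) monoid_scheme \<Rightarrow> ('n,'b) monoid_scheme \<Rightarrow> ('n \<Rightarrow> 'h \<Rightarrow> 'n) \<Rightarrow> bool" where
  "transitive_right_action H N ract \<longleftrightarrow> right_action H N ract \<and>
     (\<forall>\<eta>\<in>carrier N. \<forall>\<mu>\<in>carrier N. \<exists>h\<in>carrier H. ract \<eta> h = \<mu>)"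

definition left_skew_bracoid :: "('g,'a) monoid_scheme \<Rightarrow> ('n,'b) monoid_scheme \<Rightarrow> ('g \<Rightarrow> 'n \<Rightarrow> 'n) \<Rightarrow> bool" where
  "left_skew_bracoid G N act \<longleftrightarrow> group G \<and> group N \<and> transitive_left_action G N act \<and>
     (\<forall>g\<in>carrier G. \<forall>\<mu>\<in>carrier N. \<forall>\<eta>\<in>carrier N.
        act g (\<mu> \<otimes>\<^bsub>N\<^esub> \<eta>) = act g \<mu> \<otimes>\<^bsub>N\<^esub> inv\<^bsub>N\<^esub> (act g \<one>\<^bsub>N\<^esub>) \<otimes>\<^bsub>N\<^esub> act g \<eta>)"

definition left_bracoid :: "('g,'a) monoid_scheme \<Rightarrow> ('n,'b) monoid_scheme \<Rightarrow> ('g \<Rightarrow> 'n \<Rightarrow> 'n) \<Rightarrow> bool" where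
  "left_bracoid G N act \<longleftrightarrow> left_skew_bracoid G N act \<and> comm_group N"

definition right_skew_bracoid :: "('h,'a) monoid_scheme \<Rightarrow> ('n,'b) monoid_scheme \<Rightarrow> ('n \<Rightarrow> 'h \<Rightarrow> 'n) \<Rightarrow> bool" where
  "right_skew_bracoid H N ract \<longleftrightarrow> group H \<and> group N \<and> transitive_right_action H N ract \<and>
     (\<forall>h\<in>carrier H. \<forall>\<eta>\<in>carrier N. \<forall>\<mu>\<in>carrier N.
        ract (\<eta> \<otimes>\<^bsub>N\<^esub> \<mu>) h = ract \<eta> h \<otimes>\<^bsub>N\<^esub> inv\<^bsub>N\<^esub> (ract \<one>\<^bsub>N\<^esub> h) \<otimes>\<^bsub>N\<^esub> ract \<mu> h)"

definition two_sided_bracoid ::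
  "('g,'a) monoid_scheme \<Rightarrow> ('g \<Rightarrow> 'n \<Rightarrow> 'n) \<Rightarrow> ('h,'c) monoid_scheme \<Rightarrow> ('n \<Rightarrow> 'h \<Rightarrow> 'n) \<Rightarrow> ('n,'b) monoid_scheme \<Rightarrow> bool" where
  "two_sided_bracoid G act H ract N \<longleftrightarrow>
     left_skew_bracoid G N act \<and> right_skew_bracoid H N ract \<and> comm_group N \<and>
     (\<forall>g\<in>carrier G. \<forall>h\<in>carrier H. \<forall>\<eta>\<in>carrier N. act g (ract \<eta> h) = ract (act g \<eta>) h)"

definition alpha_act :: "('g \<Rightarrow> 'n \<Rightarrow> 'n) \<Rightarrow> ('n,'b) monoid_scheme \<Rightarrow> 'g \<Rightarrow> 'n \<Rightarrow> 'n" where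
  "alpha_act act N g \<eta> = inv\<^bsub>N\<^esub> (act g \<one>\<^bsub>N\<^esub>) \<otimes>\<^bsub>N\<^esub> act g \<eta> \<otimes>\<^bsub>N\<^esub> inv\<^bsub>N\<^esub> \<eta>"

definition beta_act :: "('n \<Rightarrow> 'h \<Rightarrow> 'n) \<Rightarrow> ('n,'b) monoid_scheme \<Rightarrow> 'h \<Rightarrow> 'n \<Rightarrow> 'n" where
  "beta_act ract N h \<eta> = inv\<^bsub>N\<^esub> \<eta> \<otimes>\<^bsub>N\<^esub> ract \<eta> h \<otimes>\<^bsub>N\<^esub> inv\<^bsub>N\<^esub> (ract \<one>\<^bsub>N\<^esub> h)"

end

theory Submission
  imports Defs
begin

definition bmul :: "('a,'b) monoid_scheme \<Rightarrow> ('a\<Rightarrow>'a\<Rightarrow>'a) \<Rightarrow> 'a \<Rightarrow> 'a \<Rightarrow> 'a" where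
  "bmul G circ a b = circ a b \<otimes>\<^bsub>G\<^esub> inv\<^bsub>G\<^esub> a \<otimes>\<^bsub>G\<^esub> inv\<^bsub>G\<^esub> b"

context comm_group begin

lemma cancel_l: "x \<in> carrier G \<Longrightarrow> y \<in> carrier G \<Longrightarrow> x \<otimes> (inv x \<otimes> y) = y"
  by (metis inv_closed l_one m_assoc r_inv)
lemma cancel_l2: "x \<in> carrier G \<Longrightarrow> y \<in> carrier G \<Longrightarrow> inv x \<otimes> (x \<otimes> y) = y"
  by (metis inv_closed l_one m_assoc l_inv)

lemma cancel_l3: "x \<in> carrier G \<Longrightarrow> y \<in> carrier G \<Longrightarrow> x \<otimes> (y \<otimes> inv x) = y"
  by (simp add: m_lcomm[of x y] cancel_l)
lemma cancel_l4: "x \<in> carrier G \<Longrightarrow> y \<in> carrier G \<Longrightarrow> inv x \<otimes> (y \<otimes> x) = y"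
  by (simp add: m_lcomm[of "inv x" y] cancel_l2)

lemmas alg = m_ac inv_mult cancel_l cancel_l2 r_inv l_inv inv_inv

lemma core:
  fixes circ :: "'a \<Rightarrow> 'a \<Rightarrow> 'a"
  assumes cl: "\<And>a b. a \<in> carrier G \<Longrightarrow> b \<in> carrier G \<Longrightarrow> circ a b \<in> carrier G"
    and ld: "\<And>a b c. a \<in> carrier G \<Longrightarrow> b \<in> carrier G \<Longrightarrow> c \<in> carrier G \<Longrightarrow>
               circ a (b \<otimes> c) = circ a b \<otimes> inv a \<otimes> circ a c"
    and ca: "\<And>a b c. a \<in> carrier G \<Longrightarrow> b \<in> carrier G \<Longrightarrow> c \<in> carrier G \<Longrightarrow>
               circ (circ a b) c = circ a (circ b c)"
    and c1: "\<And>b. b \<in> carrier G \<Longrightarrow> circ \<one> b = b"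
    and c1r: "\<And>a. a \<in> carrier G \<Longrightarrow> circ a \<one> = a"
    and cinv: "\<And>a. a \<in> carrier G \<Longrightarrow> \<exists>a'\<in>carrier G. circ a a' = \<one> \<and> circ a' a = \<one>"
    and ma: "\<And>a b c. a \<in> carrier G \<Longrightarrow> b \<in> carrier G \<Longrightarrow> c \<in> carrier G \<Longrightarrow>
               bmul G circ a (bmul G circ b c) = bmul G circ (bmul G circ a b) c"
    and x: "x \<in> carrier G" and y: "y \<in> carrier G" and c: "c \<in> carrier G"
  shows "circ (x \<otimes> y) c = circ x c \<otimes> inv c \<otimes> circ y c"
proof -
  define M where "M = bmul G circ"
  have Mcl: "M a b \<in> carrier G" if "a \<in> carrier G" "b \<in> carrier G" for a b
    using that cl by (simp add: M_def bmul_def)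
  have ceq: "circ a b = a \<otimes> b \<otimes> M a b" if "a \<in> carrier G" "b \<in> carrier G" for a b
    using that cl by (simp add: M_def bmul_def alg)
  have D2: "M a (b \<otimes> c) = M a b \<otimes> M a c" if "a \<in> carrier G" "b \<in> carrier G" "c \<in> carrier G" for a b c
    using that cl by (simp add: M_def bmul_def ld alg)
  have D2one: "M a \<one> = \<one>" if "a \<in> carrier G" for a
    using that by (simp add: M_def bmul_def c1r alg)
  have D2inv: "M a (inv b) = inv (M a b)" if "a \<in> carrier G" "b \<in> carrier G" for a b
  proof -
    have "M a (inv b) \<otimes> M a b = \<one>" using that D2[of a "inv b" b] D2one[of a] by simp
    then show ?thesis using that Mcl by (metis inv_closed inv_equality)
  qed
  have M1: "M \<one> b = \<one>" if "b \<in> carrier G" for b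
    using that by (simp add: M_def bmul_def c1 alg)
  have ma': "M a (M b c) = M (M a b) c" if "a \<in> carrier G" "b \<in> carrier G" "c \<in> carrier G" for a b c
    using ma that by (simp add: M_def)
  have D3: "M (circ a b) c = M a (M b c) \<otimes> M a c \<otimes> M b c"
    if a: "a \<in> carrier G" and b: "b \<in> carrier G" and c: "c \<in> carrier G" for a b c
  proof -
    have "circ (circ a b) c = circ a b \<otimes> c \<otimes> M (circ a b) c" using ceq cl a b c by simp
    also have "... = a \<otimes> b \<otimes> M a b \<otimes> c \<otimes> M (circ a b) c" using ceq a b by simp
    finally have e1: "circ (circ a b) c = a \<otimes> b \<otimes> M a b \<otimes> c \<otimes> M (circ a b) c" .
    have "circ a (circ b c) = a \<otimes> circ b c \<otimes> M a (circ b c)" using ceq cl a b c by simp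
    also have "... = a \<otimes> (b \<otimes> c \<otimes> M b c) \<otimes> (M a b \<otimes> M a c \<otimes> M a (M b c))"
      using ceq D2 a b c Mcl by simp
    finally have e2: "circ a (circ b c) = a \<otimes> (b \<otimes> c \<otimes> M b c) \<otimes> (M a b \<otimes> M a c \<otimes> M a (M b c))" .
    have "a \<otimes> b \<otimes> M a b \<otimes> c \<otimes> M (circ a b) c = a \<otimes> b \<otimes> M a b \<otimes> c \<otimes> (M a (M b c) \<otimes> M a c \<otimes> M b c)"
      using e1 e2 ca[OF a b c] a b c Mcl by (simp add: m_ac)
    then show ?thesis using a b c Mcl cl
      by (metis m_closed right_cancel Units_l_cancel Units_eq)
  qed
  have D4: "M (inv a) c = inv (M a c)" if a: "a \<in> carrier G" and c: "c \<in> carrier G" for a c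
  proof -
    have e: "circ a (inv a) = M a (inv a)" using ceq[of a "inv a"] a Mcl by (simp add: alg)
    have "M (circ a (inv a)) c = M (circ a (inv a)) c \<otimes> (M a c \<otimes> M (inv a) c)"
      using D3[of a "inv a" c] ma'[of a "inv a" c] e a c Mcl by (simp add: m_assoc)
    then have "M a c \<otimes> M (inv a) c = \<one>" using a c Mcl cl e
      by (metis inv_closed l_cancel_one m_closed)
    then have "M (inv a) c \<otimes> M a c = \<one>" using a c Mcl by (simp add: m_comm)
    then show ?thesis using a c Mcl by (metis inv_closed inv_equality)
  qed
  have I1: "M a (M a' c) = inv (M a c) \<otimes> inv (M a' c)"
    if a: "a \<in> carrier G" and a': "a' \<in> carrier G" and aa: "circ a a' = \<one>" and c: "c \<in> carrier G" for a a' c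
  proof -
    have "\<one> = M a (M a' c) \<otimes> (M a c \<otimes> M a' c)"
      using D3[of a a' c] M1 aa a a' c Mcl by (simp add: m_assoc)
    then have "inv (M a c \<otimes> M a' c) = M a (M a' c)"
      using a a' c Mcl by (metis inv_equality m_closed)
    then show ?thesis using a a' c Mcl by (simp add: inv_mult)
  qed
  have k2: "M (a \<otimes> M a b) z = M a z \<otimes> M (M a b) z"
    if a: "a \<in> carrier G" and b: "b \<in> carrier G" and z: "z \<in> carrier G" for a b z
  proof -
    obtain a' where a': "a' \<in> carrier G" and aa: "circ a a' = \<one>" and aa2: "circ a' a = \<one>"
      using cinv[OF a] by blast
    define d where "d = inv (M a' b)"
    have dc: "d \<in> carrier G" using d_def Mcl a' b by simp
    have Md: "M a d = M a b \<otimes> M a' b"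
      using D2inv[of a "M a' b"] I1[OF a a' aa b] a a' b Mcl by (simp add: d_def alg)
    have Mbz: "M b z \<in> carrier G" using Mcl b z by simp
    have C1: "M (M a b) z = M d z \<otimes> M (M a b \<otimes> M a' b) z"
    proof -
      have t1: "M (M a b) z = M a (M b z)" using ma' a b z by simp
      have t2: "M d z = inv (M a' (M b z))" using D4[of "M a' b" z] ma'[of a' b z] a' b z Mcl
        by (simp add: d_def)
      have t3: "M (M a b \<otimes> M a' b) z = M a (M b z) \<otimes> M a' (M b z)"
      proof -
        have "M (M a b \<otimes> M a' b) z = M a (M d z)" using Md ma'[of a d z] a dc z by simp
        also have "... = inv (M a (M a' (M b z)))" using t2 D2inv a a' Mbz Mcl by simp
        also have "... = M a (M b z) \<otimes> M a' (M b z)"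
          using I1[OF a a' aa Mbz] a a' Mbz Mcl by (simp add: alg)
        finally show ?thesis .
      qed
      have u: "M a (M b z) \<in> carrier G" and v: "M a' (M b z) \<in> carrier G" using a a' Mbz Mcl by auto
      have "M d z \<otimes> M (M a b \<otimes> M a' b) z = inv (M a' (M b z)) \<otimes> (M a (M b z) \<otimes> M a' (M b z))"
        by (simp only: t2 t3)
      also have "... = M a (M b z)" by (rule cancel_l4[OF v u])
      finally show ?thesis using t1 by simp
    qed
    have cad: "circ a d = a \<otimes> M a b"
    proof -
      have u: "M a b \<in> carrier G" and v: "M a' b \<in> carrier G" using a a' b Mcl by auto
      have "circ a d = a \<otimes> (inv (M a' b) \<otimes> (M a b \<otimes> M a' b))"
        using ceq[OF a dc] Md a dc u v by (simp add: d_def m_assoc)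
      also have "inv (M a' b) \<otimes> (M a b \<otimes> M a' b) = M a b" by (rule cancel_l4[OF v u])
      finally show ?thesis .
    qed
    have "M (circ a d) z = M (M a d) z \<otimes> M a z \<otimes> M d z"
      using D3[OF a dc z] ma'[OF a dc z] by simp
    then have "M (a \<otimes> M a b) z = M (M a b \<otimes> M a' b) z \<otimes> M a z \<otimes> M d z"
      using cad Md by simp
    also have "... = M a z \<otimes> (M d z \<otimes> M (M a b \<otimes> M a' b) z)"
      using a a' b z dc Mcl by (simp add: m_ac)
    also have "... = M a z \<otimes> M (M a b) z" using C1 by simp
    finally show ?thesis .
  qed
  obtain y' where y': "y' \<in> carrier G" and yy: "circ y y' = \<one>" and yy2: "circ y' y = \<one>"
    using cinv[OF y] by blast
  define p where "p = x \<otimes> M x y'"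
  have pc: "p \<in> carrier G" using p_def x y' Mcl by simp
  have yMy: "y \<otimes> M y' y = inv y'"
  proof -
    have m: "M y' y \<in> carrier G" using Mcl y y' by simp
    have "y' \<otimes> (y \<otimes> M y' y) = \<one>" using ceq[OF y' y] yy2 y y' m by (simp add: m_assoc)
    then have "(y \<otimes> M y' y) \<otimes> y' = \<one>" using y y' m by (simp add: m_comm[of y'])
    then have "inv y' = y \<otimes> M y' y" using y y' m by (intro inv_equality) auto
    then show ?thesis by simp
  qed
  have F2: "M p y = inv (M x y')"
  proof -
    have "M p y = M x y \<otimes> M (M x y') y" using k2[OF x y' y] p_def by simp
    also have "... = M x y \<otimes> M x (M y' y)" using ma' x y' y by simp
    also have "... = M x (y \<otimes> M y' y)" using D2 x y y' Mcl by simp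
    also have "... = inv (M x y')" using yMy D2inv x y' by simp
    finally show ?thesis .
  qed
  have cpy: "circ p y = x \<otimes> y"
  proof -
    have u: "M x y' \<in> carrier G" using Mcl x y' by simp
    have "circ p y = x \<otimes> M x y' \<otimes> y \<otimes> inv (M x y')" using ceq[OF pc y] F2 p_def by simp
    also have "... = x \<otimes> y \<otimes> (M x y' \<otimes> inv (M x y'))" using x y u by (simp add: m_ac)
    also have "... = x \<otimes> y" using x y u by simp
    finally show ?thesis .
  qed
  have Mc: "M y c \<in> carrier G" using Mcl y c by simp
  have "M (x \<otimes> y) c = M p (M y c) \<otimes> M p c \<otimes> M y c" using D3[OF pc y c] cpy by simp
  also have "... = M p (c \<otimes> M y c) \<otimes> M y c" using D2[OF pc c Mc] pc Mc c Mcl by (simp add: m_comm)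
  also have "M p (c \<otimes> M y c) = M x c"
  proof -
    have cc: "c \<otimes> M y c \<in> carrier G" using c Mc by simp
    have "M p (c \<otimes> M y c) = M x (c \<otimes> M y c) \<otimes> M x (M y' (c \<otimes> M y c))"
      using k2[OF x y' cc] ma'[OF x y' cc] p_def by simp
    also have "M y' (c \<otimes> M y c) = inv (M y c)"
    proof -
      have u: "M y' c \<in> carrier G" using Mcl y' c by simp
      have "M y' (c \<otimes> M y c) = M y' c \<otimes> M y' (M y c)" using D2 y' c Mc by simp
      also have "... = M y' c \<otimes> (inv (M y' c) \<otimes> inv (M y c))"
        using I1[OF y' y yy2 c] by simp
      also have "... = inv (M y c)" using u Mc by (simp add: cancel_l)
      finally show ?thesis .
    qed
    also have "M x (c \<otimes> M y c) \<otimes> M x (inv (M y c)) = M x c"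
    proof -
      have u: "M x c \<in> carrier G" and v: "M x (M y c) \<in> carrier G" using Mcl x c Mc by auto
      have "M x (c \<otimes> M y c) \<otimes> M x (inv (M y c)) = M x c \<otimes> (M x (M y c) \<otimes> inv (M x (M y c)))"
        using D2[OF x c Mc] D2inv[OF x Mc] u v by (simp add: m_assoc)
      also have "... = M x c" using u v by simp
      finally show ?thesis .
    qed
    finally show ?thesis .
  qed
  finally have main: "M (x \<otimes> y) c = M x c \<otimes> M y c" .
  have u: "M x c \<in> carrier G" and v: "M y c \<in> carrier G" using Mcl x y c by auto
  have "circ x c \<otimes> inv c \<otimes> circ y c = (x \<otimes> c \<otimes> M x c) \<otimes> inv c \<otimes> (y \<otimes> c \<otimes> M y c)"
    using ceq[OF x c] ceq[OF y c] by simp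
  also have "... = (x \<otimes> y \<otimes> c \<otimes> (M x c \<otimes> M y c)) \<otimes> (c \<otimes> inv c)"
    using x y c u v by (simp only: m_ac inv_closed m_closed)
  also have "... = x \<otimes> y \<otimes> c \<otimes> (M x c \<otimes> M y c)" using x y c u v by simp
  also have "... = circ (x \<otimes> y) c" using ceq[of "x \<otimes> y" c] main x y c by simp
  finally show ?thesis by simp
qed

end

theorem theorem3p6:
  fixes G :: "('g,'a) monoid_scheme" and N :: "('n,'b) monoid_scheme"
    and H :: "('h,'c) monoid_scheme"
    and act :: "'g \<Rightarrow> 'n \<Rightarrow> 'n" and ract :: "'n \<Rightarrow> 'h \<Rightarrow> 'n"
  assumes lb: "left_bracoid G N act"
    and grpH: "group H"
    and ra: "transitive_right_action H N ract"
    and comm: "\<forall>g\<in>carrier G. \<forall>h\<in>carrier H. \<forall>\<eta>\<in>carrier N. act g (ract \<eta> h) = ract (act g \<eta>) h"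
    and ab: "\<forall>g\<in>carrier G. \<forall>h\<in>carrier H. \<forall>\<eta>\<in>carrier N.
               alpha_act act N g (beta_act ract N h \<eta>) = beta_act ract N h (alpha_act act N g \<eta>)"
  shows "two_sided_bracoid G act H ract N \<and>
         (\<forall>\<eta>\<in>carrier N. \<forall>\<mu>\<in>carrier N. \<forall>h\<in>carrier H.
            ract (\<eta> \<otimes>\<^bsub>N\<^esub> \<mu>) h = ract \<eta> h \<otimes>\<^bsub>N\<^esub> inv\<^bsub>N\<^esub> (ract \<one>\<^bsub>N\<^esub> h) \<otimes>\<^bsub>N\<^esub> ract \<mu> h)"
proof -
  have lsb: "left_skew_bracoid G N act" and cN: "comm_group N" using lb by (auto simp: left_bracoid_def)
  have gG: "group G" and gN: "group N" and tla: "transitive_left_action G N act"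
    and skew: "\<forall>g\<in>carrier G. \<forall>\<mu>\<in>carrier N. \<forall>\<eta>\<in>carrier N.
        act g (\<mu> \<otimes>\<^bsub>N\<^esub> \<eta>) = act g \<mu> \<otimes>\<^bsub>N\<^esub> inv\<^bsub>N\<^esub> (act g \<one>\<^bsub>N\<^esub>) \<otimes>\<^bsub>N\<^esub> act g \<eta>"
    using lsb by (auto simp: left_skew_bracoid_def)
  interpret N: comm_group N by (rule cN)
  interpret G: group G by (rule gG)
  have acl: "act g x \<in> carrier N" if "g \<in> carrier G" "x \<in> carrier N" for g x
    using tla that by (auto simp: transitive_left_action_def left_action_def)
  have aone: "act \<one>\<^bsub>G\<^esub> x = x" if "x \<in> carrier N" for x
    using tla that by (auto simp: transitive_left_action_def left_action_def)
  have amul: "act (g \<otimes>\<^bsub>G\<^esub> k) x = act g (act k x)" if "g \<in> carrier G" "k \<in> carrier G" "x \<in> carrier N" for g k x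
    using tla that by (auto simp: transitive_left_action_def left_action_def)
  have atr: "\<exists>g\<in>carrier G. act g x = y" if "x \<in> carrier N" "y \<in> carrier N" for x y
    using tla that by (auto simp: transitive_left_action_def)
  have rcl: "ract x h \<in> carrier N" if "h \<in> carrier H" "x \<in> carrier N" for h x
    using ra that by (auto simp: transitive_right_action_def right_action_def)
  have rtr: "\<exists>h\<in>carrier H. ract x h = y" if "x \<in> carrier N" "y \<in> carrier N" for x y
    using ra that by (auto simp: transitive_right_action_def)
  define ga where "ga a = (SOME g. g \<in> carrier G \<and> act g \<one>\<^bsub>N\<^esub> = a)" for a
  define hb where "hb c = (SOME h. h \<in> carrier H \<and> ract \<one>\<^bsub>N\<^esub> h = c)" for c
  have ga: "ga a \<in> carrier G \<and> act (ga a) \<one>\<^bsub>N\<^esub> = a" if "a \<in> carrier N" for a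
  proof -
    have "\<exists>g. g \<in> carrier G \<and> act g \<one>\<^bsub>N\<^esub> = a" using atr[OF N.one_closed that] by blast
    then show ?thesis unfolding ga_def by (rule someI_ex)
  qed
  have hb: "hb c \<in> carrier H \<and> ract \<one>\<^bsub>N\<^esub> (hb c) = c" if "c \<in> carrier N" for c
  proof -
    have "\<exists>h. h \<in> carrier H \<and> ract \<one>\<^bsub>N\<^esub> h = c" using rtr[OF N.one_closed that] by blast
    then show ?thesis unfolding hb_def by (rule someI_ex)
  qed
  define circ where "circ a b = act (ga a) b" for a b
  have R1: "act g b = ract (act g \<one>\<^bsub>N\<^esub>) (hb b)" if "g \<in> carrier G" "b \<in> carrier N" for g b
  proof -
    have "act g (ract \<one>\<^bsub>N\<^esub> (hb b)) = ract (act g \<one>\<^bsub>N\<^esub>) (hb b)"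
      using comm that(1) hb[OF that(2)] N.one_closed by blast
    then show ?thesis using hb[OF that(2)] by simp
  qed
  have circr: "circ a b = ract a (hb b)" if "a \<in> carrier N" "b \<in> carrier N" for a b
    using R1[of "ga a" b] ga[OF that(1)] that by (simp add: circ_def)
  have R2: "act g b = circ (act g \<one>\<^bsub>N\<^esub>) b" if "g \<in> carrier G" "b \<in> carrier N" for g b
    using R1[OF that] circr[of "act g \<one>\<^bsub>N\<^esub>" b] acl that by simp
  have R3: "ract \<eta> h = circ \<eta> (ract \<one>\<^bsub>N\<^esub> h)" if "\<eta> \<in> carrier N" "h \<in> carrier H" for \<eta> h
  proof -
    have "ract \<eta> h = ract (act (ga \<eta>) \<one>\<^bsub>N\<^esub>) h" using ga[OF that(1)] by simp
    also have "... = act (ga \<eta>) (ract \<one>\<^bsub>N\<^esub> h)" using comm ga[OF that(1)] that by simp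
    finally show ?thesis by (simp add: circ_def)
  qed
  have cl: "circ a b \<in> carrier N" if "a \<in> carrier N" "b \<in> carrier N" for a b
    using acl ga that by (simp add: circ_def)
  have ld: "circ a (b \<otimes>\<^bsub>N\<^esub> c) = circ a b \<otimes>\<^bsub>N\<^esub> inv\<^bsub>N\<^esub> a \<otimes>\<^bsub>N\<^esub> circ a c"
    if "a \<in> carrier N" "b \<in> carrier N" "c \<in> carrier N" for a b c
    using skew ga[OF that(1)] that by (simp add: circ_def)
  have ca: "circ (circ a b) c = circ a (circ b c)"
    if "a \<in> carrier N" "b \<in> carrier N" "c \<in> carrier N" for a b c
  proof -
    have "circ (circ a b) c = ract (act (ga a) b) (hb c)" using circr cl that by (simp add: circ_def)
    also have "... = act (ga a) (ract b (hb c))" using comm ga hb that by simp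
    also have "... = circ a (circ b c)" using circr that by (simp add: circ_def)
    finally show ?thesis .
  qed
  have c1: "circ \<one>\<^bsub>N\<^esub> b = b" if "b \<in> carrier N" for b
    using circr[of "\<one>\<^bsub>N\<^esub>" b] hb that by simp
  have c1r: "circ a \<one>\<^bsub>N\<^esub> = a" if "a \<in> carrier N" for a
    using ga that by (simp add: circ_def)
  have cinv: "\<exists>a'\<in>carrier N. circ a a' = \<one>\<^bsub>N\<^esub> \<and> circ a' a = \<one>\<^bsub>N\<^esub>" if a: "a \<in> carrier N" for a
  proof -
    define g where "g = ga a"
    have g: "g \<in> carrier G" "act g \<one>\<^bsub>N\<^esub> = a" using ga[OF a] g_def by auto
    define a' where "a' = act (inv\<^bsub>G\<^esub> g) \<one>\<^bsub>N\<^esub>"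
    have a'c: "a' \<in> carrier N" using acl g a'_def by simp
    have i1: "act (g \<otimes>\<^bsub>G\<^esub> inv\<^bsub>G\<^esub> g) \<one>\<^bsub>N\<^esub> = act g (act (inv\<^bsub>G\<^esub> g) \<one>\<^bsub>N\<^esub>)"
      by (rule amul) (auto simp: g)
    have e1: "circ a a' = \<one>\<^bsub>N\<^esub>" using i1 g aone by (simp add: circ_def g_def a'_def)
    have i2: "act (inv\<^bsub>G\<^esub> g \<otimes>\<^bsub>G\<^esub> g) \<one>\<^bsub>N\<^esub> = act (inv\<^bsub>G\<^esub> g) (act g \<one>\<^bsub>N\<^esub>)"
      by (rule amul) (auto simp: g)
    have "circ a' a = act (inv\<^bsub>G\<^esub> g) a" using R2[of "inv\<^bsub>G\<^esub> g" a] g a a'_def by simp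
    also have "... = \<one>\<^bsub>N\<^esub>" using i2 g aone by simp
    finally show ?thesis using e1 a'c by blast
  qed
  have alpha: "alpha_act act N (ga a) b = bmul N circ a b" if "a \<in> carrier N" "b \<in> carrier N" for a b
    using ga[OF that(1)] that cl by (simp add: alpha_act_def bmul_def circ_def N.m_ac)
  have beta: "beta_act ract N (hb c) b = bmul N circ b c" if "b \<in> carrier N" "c \<in> carrier N" for b c
    using R3[of b "hb c"] hb[OF that(2)] that cl by (simp add: beta_act_def bmul_def N.m_ac)
  have bcl: "bmul N circ a b \<in> carrier N" if "a \<in> carrier N" "b \<in> carrier N" for a b
    using cl that by (simp add: bmul_def)
  have ma: "bmul N circ a (bmul N circ b c) = bmul N circ (bmul N circ a b) c"
    if "a \<in> carrier N" "b \<in> carrier N" "c \<in> carrier N" for a b c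
  proof -
    have "alpha_act act N (ga a) (beta_act ract N (hb c) b) = beta_act ract N (hb c) (alpha_act act N (ga a) b)"
      using ab ga hb that by simp
    then show ?thesis using alpha beta bcl that by simp
  qed
  have rd: "ract (\<eta> \<otimes>\<^bsub>N\<^esub> \<mu>) h = ract \<eta> h \<otimes>\<^bsub>N\<^esub> inv\<^bsub>N\<^esub> (ract \<one>\<^bsub>N\<^esub> h) \<otimes>\<^bsub>N\<^esub> ract \<mu> h"
    if "\<eta> \<in> carrier N" "\<mu> \<in> carrier N" "h \<in> carrier H" for \<eta> \<mu> h
  proof -
    have c: "ract \<one>\<^bsub>N\<^esub> h \<in> carrier N" using rcl that by simp
    have e: "circ (\<eta> \<otimes>\<^bsub>N\<^esub> \<mu>) (ract \<one>\<^bsub>N\<^esub> h) = circ \<eta> (ract \<one>\<^bsub>N\<^esub> h) \<otimes>\<^bsub>N\<^esub> inv\<^bsub>N\<^esub> (ract \<one>\<^bsub>N\<^esub> h) \<otimes>\<^bsub>N\<^esub> circ \<mu> (ract \<one>\<^bsub>N\<^esub> h)"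
      by (rule N.core[of circ, OF cl ld ca c1 c1r cinv ma that(1) that(2) c])
    have r1: "ract (\<eta> \<otimes>\<^bsub>N\<^esub> \<mu>) h = circ (\<eta> \<otimes>\<^bsub>N\<^esub> \<mu>) (ract \<one>\<^bsub>N\<^esub> h)"
      using that by (intro R3) auto
    have r2: "ract \<eta> h = circ \<eta> (ract \<one>\<^bsub>N\<^esub> h)" using that by (intro R3) auto
    have r3: "ract \<mu> h = circ \<mu> (ract \<one>\<^bsub>N\<^esub> h)" using that by (intro R3) auto
    show ?thesis unfolding r1 r2 r3 by (rule e)
  qed
  have rsb: "right_skew_bracoid H N ract"
    unfolding right_skew_bracoid_def using grpH gN ra rd by auto
  show ?thesis unfolding two_sided_bracoid_def using lsb rsb cN comm rd by auto
qed

end
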